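(* Let $f(t)=\sum_{k=0}^n a_kt^k$ with $a_k\in\mathbb{H}$ be a left quaternion polynomial. Then $|J(f)(c)|\ge0$ for every $c\in\mathbb{H}$.
   Context: $\mathbb{H}$ is the real quaternion algebra, identified with $\mathbb{R}^4$ via $x+\mathbf{i}y+\mathbf{j}z+\mathbf{k}w\mapsto(x,y,z,w)$. A left polynomial $f(t)=\sum a_kt^k$ is evaluated at $c\in\mathbb{H}$ as $\sum a_kc^k$ and viewed as a map $\mathbb{R}^4\to\mathbb{R}^4$ via $f=f_1+\mathbf{i}f_2+\mathbf{j}f_3+\mathbf{k}f_4\mapsto(f_1,f_2,f_3,f_4)$; $J(f)(c)=[\partial f_i/\partial x_j](c)$ with $(x_1,\dots,x_4)=(x,y,z,w)$, and $|J(f)(c)|$ is its determinant. *)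

theory Defs
  imports "HOL-Analysis.Analysis"
begin

text \<open>The quaternions H are identified with real^4 via
  x + iy + jz + kw |-> (x,y,z,w), i.e. components 1,2,3,4 (index type 4).
  Quaternion multiplication in these coordinates:\<close>

definition hmult :: "real^4 \<Rightarrow> real^4 \<Rightarrow> real^4" where
  "hmult p q = (\<chi> i.
     if i = 1 then p$1*q$1 - p$2*q$2 - p$3*q$3 - p$4*q$4
     else if i = 2 then p$1*q$2 + p$2*q$1 + p$3*q$4 - p$4*q$3
     else if i = 3 then p$1*q$3 - p$2*q$4 + p$3*q$1 + p$4*q$2
     else p$1*q$4 + p$2*q$3 - p$3*q$2 + p$4*q$1)"

definition hone :: "real^4" where
  "hone = (\<chi> i. if i = 1 then 1 else 0)"

primrec hpow :: "real^4 \<Rightarrow> nat \<Rightarrow> real^4" where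
  "hpow c 0 = hone"
| "hpow c (Suc k) = hmult (hpow c k) c"

definition left_poly_eval :: "(nat \<Rightarrow> real^4) \<Rightarrow> nat \<Rightarrow> real^4 \<Rightarrow> real^4" where
  "left_poly_eval a n c = (\<Sum>k\<in>{0..n}. hmult (a k) (hpow c k))"

definition partial_deriv :: "(real^4 \<Rightarrow> real^4) \<Rightarrow> 4 \<Rightarrow> 4 \<Rightarrow> real^4 \<Rightarrow> real" where
  "partial_deriv F i j c = deriv (\<lambda>t. F (c + t *\<^sub>R axis j 1) $ i) 0"

definition jacobian :: "(real^4 \<Rightarrow> real^4) \<Rightarrow> real^4 \<Rightarrow> real^4^4" where
  "jacobian F c = (\<chi> i j. partial_deriv F i j c)"

end

theory Submission
  imports Defs
begin


lemma hmult_add_left: "hmult (p+q) r = hmult p r + hmult q r"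
  by (simp add: hmult_def vec_eq_iff forall_4 algebra_simps)
lemma hmult_add_right: "hmult r (p+q) = hmult r p + hmult r q"
  by (simp add: hmult_def vec_eq_iff forall_4 algebra_simps)
lemma hmult_diff_right: "hmult r (p-q) = hmult r p - hmult r q"
  by (simp add: hmult_def vec_eq_iff forall_4 algebra_simps)
lemma hmult_scaleR_left: "hmult (t *\<^sub>R p) r = t *\<^sub>R hmult p r"
  by (simp add: hmult_def vec_eq_iff forall_4 algebra_simps)
lemma hmult_scaleR_right: "hmult r (t *\<^sub>R p) = t *\<^sub>R hmult r p"
  by (simp add: hmult_def vec_eq_iff forall_4 algebra_simps)
lemma hmult_zero_left[simp]: "hmult 0 r = 0"
  by (simp add: hmult_def vec_eq_iff forall_4)
lemma hmult_zero_right[simp]: "hmult r 0 = 0"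
  by (simp add: hmult_def vec_eq_iff forall_4)
lemma hmult_assoc: "hmult (hmult p q) r = hmult p (hmult q r)"
  by (simp add: hmult_def vec_eq_iff forall_4 algebra_simps)

lemma bb_hmult: "bounded_bilinear hmult"
proof -
  have "bilinear hmult"
    unfolding bilinear_def
    by (auto intro!: linearI simp: hmult_add_left hmult_add_right hmult_scaleR_left hmult_scaleR_right)
  then show ?thesis by (simp add: bilinear_conv_bounded_bilinear)
qed

definition ss :: "real^4 \<Rightarrow> real" where "ss c = c$2^2+c$3^2+c$4^2"

definition Pp :: "real^4 \<Rightarrow> real^4 \<Rightarrow> real^4" where
  "Pp c h = (\<chi> i. if i = 1 then h$1 else (h$2*c$2+h$3*c$3+h$4*c$4)/ss c * c$i)"
definition Qp :: "real^4 \<Rightarrow> real^4 \<Rightarrow> real^4" where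
  "Qp c h = h - Pp c h"
definition hconj :: "real^4 \<Rightarrow> real^4" where
  "hconj c = (\<chi> i. if i = 1 then c$1 else - c$i)"

lemma ss0: "ss c = 0 \<Longrightarrow> c$2 = 0 \<and> c$3 = 0 \<and> c$4 = 0"
  unfolding ss_def by (smt (verit) power2_less_eq_zero_iff zero_le_power2)

lemma hconj_ss0: "ss c = 0 \<Longrightarrow> hconj c = c"
  using ss0[of c] by (simp add: hconj_def vec_eq_iff forall_4)

lemma Pp_comm: "hmult (Pp c h) c = hmult c (Pp c h)"
  by (simp add: hmult_def Pp_def vec_eq_iff forall_4 algebra_simps)

lemma Qp_comm: "hmult (Qp c h) c = hmult (hconj c) (Qp c h)"
proof (cases "ss c = 0")
  case True
  then show ?thesis using ss0[of c]
    by (simp add: hmult_def Qp_def Pp_def hconj_def vec_eq_iff forall_4 algebra_simps)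
next
  case False
  define t where "t = (h$2*c$2+h$3*c$3+h$4*c$4)/ss c"
  have ht: "t * (c$2^2+c$3^2+c$4^2) = h$2*c$2+h$3*c$3+h$4*c$4"
    using False unfolding t_def ss_def by simp
  have "Pp c h = (\<chi> i. if i = 1 then h$1 else t * c$i)"
    unfolding Pp_def t_def by simp
  then have q: "Qp c h = (\<chi> i. if i = 1 then 0 else h$i - t * c$i)"
    unfolding Qp_def by (simp add: vec_eq_iff forall_4)
  show ?thesis
    unfolding q hmult_def hconj_def
    apply (simp add: vec_eq_iff forall_4 algebra_simps)
    using ht by algebra
qed



definition good :: "real^4 \<Rightarrow> (real^4 \<Rightarrow> real^4) \<Rightarrow> bool" where
  "good c D \<longleftrightarrow> (\<exists>U V. (\<forall>h. D h = hmult U (Pp c h) + hmult V (Qp c h)) \<and> (ss c = 0 \<longrightarrow> U = V))"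

lemma PQ_sum: "Pp c h + Qp c h = h" by (simp add: Qp_def)

lemma hpow_deriv: "\<exists>D. ((\<lambda>x. hpow x k) has_derivative D) (at c) \<and> good c D"
proof (induction k)
  case 0
  show ?case
    by (rule exI[of _ "\<lambda>h. 0"]) (auto simp: good_def intro!: exI[of _ 0])
next
  case (Suc k)
  then obtain D U V where D: "((\<lambda>x. hpow x k) has_derivative D) (at c)"
    and DU: "\<And>h. D h = hmult U (Pp c h) + hmult V (Qp c h)" and UV: "ss c = 0 \<longrightarrow> U = V"
    unfolding good_def by blast
  have "((\<lambda>x. hmult (hpow x k) x) has_derivative (\<lambda>h. hmult (hpow c k) h + hmult (D h) c)) (at c)"
    using bounded_bilinear.FDERIV[OF bb_hmult D has_derivative_ident] by simp
  moreover have "good c (\<lambda>h. hmult (hpow c k) h + hmult (D h) c)"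
    unfolding good_def
  proof (intro exI conjI allI impI)
    fix h
    have "hmult (hpow c k) h + hmult (D h) c
       = hmult (hpow c k) (Pp c h) + hmult (hpow c k) (Qp c h)
         + hmult U (hmult (Pp c h) c) + hmult V (hmult (Qp c h) c)"
      unfolding DU hmult_add_left hmult_assoc
      by (metis PQ_sum hmult_add_right add.assoc)
    also have "\<dots> = hmult (hmult U c + hpow c k) (Pp c h) + hmult (hmult V (hconj c) + hpow c k) (Qp c h)"
      unfolding Pp_comm Qp_comm hmult_add_left hmult_assoc by (simp add: algebra_simps)
    finally show "hmult (hpow c k) h + hmult (D h) c =
       hmult (hmult U c + hpow c k) (Pp c h) + hmult (hmult V (hconj c) + hpow c k) (Qp c h)" .
  next
    assume "ss c = 0"
    then show "hmult U c + hpow c k = hmult V (hconj c) + hpow c k"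
      using UV hconj_ss0 by simp
  qed
  ultimately show ?case by auto
qed

lemma term_deriv: "\<exists>D. ((\<lambda>x. hmult b (hpow x k)) has_derivative D) (at c) \<and> good c D"
proof -
  obtain D U V where D: "((\<lambda>x. hpow x k) has_derivative D) (at c)"
    and DU: "\<And>h. D h = hmult U (Pp c h) + hmult V (Qp c h)" and UV: "ss c = 0 \<longrightarrow> U = V"
    using hpow_deriv unfolding good_def by blast
  have "((\<lambda>x. hmult b (hpow x k)) has_derivative (\<lambda>h. hmult b (D h) + hmult 0 (hpow c k))) (at c)"
    using bounded_bilinear.FDERIV[OF bb_hmult has_derivative_const D] .
  moreover have "good c (\<lambda>h. hmult b (D h) + hmult 0 (hpow c k))"
    unfolding good_def
    by (rule exI[of _ "hmult b U"], rule exI[of _ "hmult b V"])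
       (simp add: DU hmult_add_right hmult_assoc UV)
  ultimately show ?thesis by blast
qed

lemma good_add: "good c D1 \<Longrightarrow> good c D2 \<Longrightarrow> good c (\<lambda>h. D1 h + D2 h)"
proof -
  assume "good c D1" "good c D2"
  then obtain U1 V1 U2 V2 where a: "\<And>h. D1 h = hmult U1 (Pp c h) + hmult V1 (Qp c h)" "ss c = 0 \<longrightarrow> U1 = V1"
    and b: "\<And>h. D2 h = hmult U2 (Pp c h) + hmult V2 (Qp c h)" "ss c = 0 \<longrightarrow> U2 = V2"
    unfolding good_def by metis
  show ?thesis unfolding good_def
    by (rule exI[of _ "U1+U2"], rule exI[of _ "V1+V2"]) (simp add: hmult_add_left a b)
qed

lemma poly_deriv: "\<exists>D. (left_poly_eval a n has_derivative D) (at c) \<and> good c D"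
proof (induction n)
  case 0
  have e: "left_poly_eval a 0 = (\<lambda>x. hmult (a 0) (hpow x 0))"
    by (simp add: left_poly_eval_def fun_eq_iff)
  show ?case unfolding e by (rule term_deriv)
next
  case (Suc n)
  then obtain D1 where D1: "(left_poly_eval a n has_derivative D1) (at c)" "good c D1" by blast
  obtain D2 where D2: "((\<lambda>x. hmult (a (Suc n)) (hpow x (Suc n))) has_derivative D2) (at c)" "good c D2"
    using term_deriv by blast
  have e: "left_poly_eval a (Suc n) = (\<lambda>x. left_poly_eval a n x + hmult (a (Suc n)) (hpow x (Suc n)))"
    by (simp add: left_poly_eval_def fun_eq_iff)
  show ?case unfolding e
    using has_derivative_add[OF D1(1) D2(1)] good_add[OF D1(2) D2(2)] by blast
qed

lemma jac_matrix:
  assumes "(F has_derivative D) (at c)"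
  shows "jacobian F c = matrix D"
proof -
  have lin: "linear D" using assms has_derivative_linear by blast
  have pd: "partial_deriv F i j c = D (axis j 1) $ i" for i j
  proof -
    let ?e = "axis j 1 :: real^4"
    have 1: "((\<lambda>t. c + t *\<^sub>R ?e) has_derivative (\<lambda>t. t *\<^sub>R ?e)) (at 0)"
      by (auto intro!: derivative_eq_intros)
    have 2: "(F has_derivative D) (at ((\<lambda>t. c + t *\<^sub>R ?e) 0))" using assms by simp
    have 3: "((\<lambda>t. F (c + t *\<^sub>R ?e)) has_derivative (\<lambda>t. D (t *\<^sub>R ?e))) (at 0)"
      using has_derivative_compose[OF 1 2] by (simp add: o_def)
    have 4: "((\<lambda>t. F (c + t *\<^sub>R ?e) $ i) has_derivative (\<lambda>t. D (t *\<^sub>R ?e) $ i)) (at 0)"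
      using bounded_linear.has_derivative[OF bounded_linear_vec_nth 3] .
    have "(\<lambda>t. D (t *\<^sub>R ?e) $ i) = (\<lambda>t. D ?e $ i * t)"
      using linear_scale[OF lin] by (auto simp: fun_eq_iff)
    with 4 have "((\<lambda>t. F (c + t *\<^sub>R ?e) $ i) has_real_derivative (D ?e $ i)) (at 0)"
      by (simp add: has_field_derivative_def)
    then show ?thesis unfolding partial_deriv_def by (rule DERIV_imp_deriv)
  qed
  show ?thesis unfolding jacobian_def matrix_def by (simp add: pd)
qed


lemma det_4:
  "det (A::'a::comm_ring_1^4^4) =
    A$1$1 * A$2$2 * A$3$3 * A$4$4
    - A$1$1 * A$2$2 * A$3$4 * A$4$3
    - A$1$1 * A$2$3 * A$3$2 * A$4$4
    + A$1$1 * A$2$3 * A$3$4 * A$4$2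
    + A$1$1 * A$2$4 * A$3$2 * A$4$3
    - A$1$1 * A$2$4 * A$3$3 * A$4$2
    - A$1$2 * A$2$1 * A$3$3 * A$4$4
    + A$1$2 * A$2$1 * A$3$4 * A$4$3
    + A$1$2 * A$2$3 * A$3$1 * A$4$4
    - A$1$2 * A$2$3 * A$3$4 * A$4$1
    - A$1$2 * A$2$4 * A$3$1 * A$4$3
    + A$1$2 * A$2$4 * A$3$3 * A$4$1
    + A$1$3 * A$2$1 * A$3$2 * A$4$4
    - A$1$3 * A$2$1 * A$3$4 * A$4$2
    - A$1$3 * A$2$2 * A$3$1 * A$4$4
    + A$1$3 * A$2$2 * A$3$4 * A$4$1
    + A$1$3 * A$2$4 * A$3$1 * A$4$2
    - A$1$3 * A$2$4 * A$3$2 * A$4$1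
    - A$1$4 * A$2$1 * A$3$2 * A$4$3
    + A$1$4 * A$2$1 * A$3$3 * A$4$2
    + A$1$4 * A$2$2 * A$3$1 * A$4$3
    - A$1$4 * A$2$2 * A$3$3 * A$4$1
    - A$1$4 * A$2$3 * A$3$1 * A$4$2
    + A$1$4 * A$2$3 * A$3$2 * A$4$1
"
proof -
  have f1: "finite {2::4, 3, 4}" "1 \<notin> {2::4, 3, 4}" by auto
  have f2: "finite {3::4, 4}" "2 \<notin> {3::4, 4}" by auto
  have f3: "finite {4::4}" "3 \<notin> {4::4}" by auto
  show ?thesis
    unfolding det_def UNIV_4
    unfolding sum_over_permutations_insert[OF f1]
    unfolding sum_over_permutations_insert[OF f2]
    unfolding sum_over_permutations_insert[OF f3]
    unfolding permutes_sing
    by (simp add: sign_swap_id permutation_swap_id sign_compose permutation_compose sign_id swap_id_eq algebra_simps)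
qed
lemma poly3:
  fixes c0 c1 c2 c3 p2 p3 p4 :: real
  defines "s \<equiv> p2^2+p3^2+p4^2"
  defines "w2 \<equiv> p2*c0 - p3*c3 + p4*c2"
  and "w3 \<equiv> p2*c3 + p3*c0 - p4*c1"
  and "w4 \<equiv> -p2*c2 + p3*c1 + p4*c0"
  defines "y22 \<equiv> p2*p2 + s*c0 - p2*w2" and "y23 \<equiv> p3*p2 - s*c3 - p3*w2" and "y24 \<equiv> p4*p2 + s*c2 - p4*w2"
  and "y32 \<equiv> p2*p3 + s*c3 - p2*w3" and "y33 \<equiv> p3*p3 + s*c0 - p3*w3" and "y34 \<equiv> p4*p3 - s*c1 - p4*w3"
  and "y42 \<equiv> p2*p4 - s*c2 - p2*w4" and "y43 \<equiv> p3*p4 + s*c1 - p3*w4" and "y44 \<equiv> p4*p4 + s*c0 - p4*w4"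
  shows "y22*y33*y44 + y23*y34*y42 + y24*y32*y43 - y22*y34*y43 - y23*y32*y44 - y24*y33*y42
     = s^2 * (s*c0^2 + (c1*p2+c2*p3+c3*p4)^2)"
  unfolding y22_def y23_def y24_def y32_def y33_def y34_def y42_def y43_def y44_def w2_def w3_def w4_def s_def
  by algebra

lemma det_L: "det (matrix (hmult A)) = (A$1^2+A$2^2+A$3^2+A$4^2)^2"
  unfolding det_4
  apply (simp add: matrix_def hmult_def axis_def)
  apply algebra
  done

lemma det_X:
  assumes sp: "ss c > 0"
  shows "det (matrix (\<lambda>h. Pp c h + hmult C (Qp c h))) \<ge> 0"
proof -
  define X where "X = matrix (\<lambda>h. Pp c h + hmult C (Qp c h))"
  define s where "s = ss c"
  define p2 where "p2 = c$2"
  define p3 where "p3 = c$3"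
  define p4 where "p4 = c$4"
  define c0 where "c0 = C$1"
  define c1 where "c1 = C$2"
  define c2 where "c2 = C$3"
  define c3 where "c3 = C$4"
  define w2 where "w2 = p2*c0 - p3*c3 + p4*c2"
  define w3 where "w3 = p2*c3 + p3*c0 - p4*c1"
  define w4 where "w4 = -p2*c2 + p3*c1 + p4*c0"
  note sd = s_def p2_def p3_def p4_def c0_def c1_def c2_def c3_def
  have e22: "X$2$2 = (p2*p2 + s*c0 - p2*w2)/s"
    unfolding X_def using sp by (simp add: matrix_def Pp_def Qp_def hmult_def axis_def field_simps w2_def w3_def w4_def sd) (simp add: algebra_simps)?
  have e23: "X$2$3 = (p3*p2 - s*c3 - p3*w2)/s"
    unfolding X_def using sp by (simp add: matrix_def Pp_def Qp_def hmult_def axis_def field_simps w2_def w3_def w4_def sd) (simp add: algebra_simps)?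
  have e24: "X$2$4 = (p4*p2 + s*c2 - p4*w2)/s"
    unfolding X_def using sp by (simp add: matrix_def Pp_def Qp_def hmult_def axis_def field_simps w2_def w3_def w4_def sd) (simp add: algebra_simps)?
  have e32: "X$3$2 = (p2*p3 + s*c3 - p2*w3)/s"
    unfolding X_def using sp by (simp add: matrix_def Pp_def Qp_def hmult_def axis_def field_simps w2_def w3_def w4_def sd) (simp add: algebra_simps)?
  have e33: "X$3$3 = (p3*p3 + s*c0 - p3*w3)/s"
    unfolding X_def using sp by (simp add: matrix_def Pp_def Qp_def hmult_def axis_def field_simps w2_def w3_def w4_def sd) (simp add: algebra_simps)?
  have e34: "X$3$4 = (p4*p3 - s*c1 - p4*w3)/s"
    unfolding X_def using sp by (simp add: matrix_def Pp_def Qp_def hmult_def axis_def field_simps w2_def w3_def w4_def sd) (simp add: algebra_simps)?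
  have e42: "X$4$2 = (p2*p4 - s*c2 - p2*w4)/s"
    unfolding X_def using sp by (simp add: matrix_def Pp_def Qp_def hmult_def axis_def field_simps w2_def w3_def w4_def sd) (simp add: algebra_simps)?
  have e43: "X$4$3 = (p3*p4 + s*c1 - p3*w4)/s"
    unfolding X_def using sp by (simp add: matrix_def Pp_def Qp_def hmult_def axis_def field_simps w2_def w3_def w4_def sd) (simp add: algebra_simps)?
  have e44: "X$4$4 = (p4*p4 + s*c0 - p4*w4)/s"
    unfolding X_def using sp by (simp add: matrix_def Pp_def Qp_def hmult_def axis_def field_simps w2_def w3_def w4_def sd) (simp add: algebra_simps)?
  have e11: "X$1$1 = 1"
    unfolding X_def by (simp add: matrix_def Pp_def Qp_def hmult_def axis_def)
  have e21: "X$2$1 = 0"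
    unfolding X_def by (simp add: matrix_def Pp_def Qp_def hmult_def axis_def)
  have e31: "X$3$1 = 0"
    unfolding X_def by (simp add: matrix_def Pp_def Qp_def hmult_def axis_def)
  have e41: "X$4$1 = 0"
    unfolding X_def by (simp add: matrix_def Pp_def Qp_def hmult_def axis_def)

  have "det X = ((p2*p2 + s*c0 - p2*w2)/s) * ((p3*p3 + s*c0 - p3*w3)/s) * ((p4*p4 + s*c0 - p4*w4)/s)
      + ((p3*p2 - s*c3 - p3*w2)/s) * ((p4*p3 - s*c1 - p4*w3)/s) * ((p2*p4 - s*c2 - p2*w4)/s)
      + ((p4*p2 + s*c2 - p4*w2)/s) * ((p2*p3 + s*c3 - p2*w3)/s) * ((p3*p4 + s*c1 - p3*w4)/s)
      - ((p2*p2 + s*c0 - p2*w2)/s) * ((p4*p3 - s*c1 - p4*w3)/s) * ((p3*p4 + s*c1 - p3*w4)/s)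
      - ((p3*p2 - s*c3 - p3*w2)/s) * ((p2*p3 + s*c3 - p2*w3)/s) * ((p4*p4 + s*c0 - p4*w4)/s)
      - ((p4*p2 + s*c2 - p4*w2)/s) * ((p3*p3 + s*c0 - p3*w3)/s) * ((p2*p4 - s*c2 - p2*w4)/s)"
    unfolding det_4 e11 e21 e31 e41 e22 e23 e24 e32 e33 e34 e42 e43 e44 by simp
  also have "\<dots> = ((p2*p2 + s*c0 - p2*w2) * (p3*p3 + s*c0 - p3*w3) * (p4*p4 + s*c0 - p4*w4)
      + (p3*p2 - s*c3 - p3*w2) * (p4*p3 - s*c1 - p4*w3) * (p2*p4 - s*c2 - p2*w4)
      + (p4*p2 + s*c2 - p4*w2) * (p2*p3 + s*c3 - p2*w3) * (p3*p4 + s*c1 - p3*w4)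
      - (p2*p2 + s*c0 - p2*w2) * (p4*p3 - s*c1 - p4*w3) * (p3*p4 + s*c1 - p3*w4)
      - (p3*p2 - s*c3 - p3*w2) * (p2*p3 + s*c3 - p2*w3) * (p4*p4 + s*c0 - p4*w4)
      - (p4*p2 + s*c2 - p4*w2) * (p3*p3 + s*c0 - p3*w3) * (p2*p4 - s*c2 - p2*w4)) / s^3"
    by (simp add: divide_simps power3_eq_cube)
  also have "\<dots> = s^2 * (s*c0^2 + (c1*p2+c2*p3+c3*p4)^2) / s^3"
    using poly3[of p2 p3 p4 c0 c3 c2 c1] unfolding w2_def w3_def w4_def s_def ss_def p2_def p3_def p4_def
    by simp
  also have "\<dots> \<ge> 0" using sp unfolding s_def by simp
  finally show ?thesis unfolding X_def .
qed


lemma hmult_hone_left: "hmult hone p = p"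
  by (simp add: hmult_def hone_def vec_eq_iff forall_4)

definition hinv :: "real^4 \<Rightarrow> real^4" where
  "hinv U = (\<chi> i. (if i = 1 then U$1 else - U$i) / (U$1^2+U$2^2+U$3^2+U$4^2))"

lemma hmult_hinv: assumes "U \<noteq> 0" shows "hmult U (hinv U) = hone"
proof -
  have "U$1^2+U$2^2+U$3^2+U$4^2 \<noteq> 0"
  proof
    assume h: "U$1^2+U$2^2+U$3^2+U$4^2 = 0"
    have "U$1 = 0 \<and> U$2 = 0 \<and> U$3 = 0 \<and> U$4 = 0"
      using h by (smt (verit) power2_less_eq_zero_iff zero_le_power2)
    then have "U = 0" by (simp add: vec_eq_iff forall_4)
    with assms show False by simp
  qed
  moreover have "hinv U = (1/(U$1^2+U$2^2+U$3^2+U$4^2)) *\<^sub>R hconj U"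
    by (simp add: hinv_def hconj_def vec_eq_iff forall_4)
  moreover have "hmult U (hconj U) = (U$1^2+U$2^2+U$3^2+U$4^2) *\<^sub>R hone"
    by (simp add: hmult_def hconj_def hone_def vec_eq_iff forall_4 algebra_simps power2_eq_square)
  ultimately show ?thesis by (simp add: hmult_scaleR_right)
qed

lemma linear_Pp: "linear (Pp c)"
  by (rule linearI) (simp_all add: Pp_def vec_eq_iff forall_4 algebra_simps add_divide_distrib)

lemma linear_hmult: "linear (hmult U)"
  using bounded_bilinear.bounded_linear_right[OF bb_hmult] bounded_linear.linear by blast

lemma linear_X: "linear (\<lambda>h. Pp c h + hmult C (Qp c h))"
proof -
  have "linear (Qp c)" unfolding Qp_def
    using linear_compose_sub[OF linear_id linear_Pp] by (simp add: id_def)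
  then have "linear (\<lambda>h. hmult C (Qp c h))"
    using linear_compose[OF _ linear_hmult] by (simp add: o_def)
  then show ?thesis using linear_Pp linear_compose_add by blast
qed

lemma det_good:
  assumes "good c D" shows "det (matrix D) \<ge> 0"
proof -
  obtain U V where DU: "\<And>h. D h = hmult U (Pp c h) + hmult V (Qp c h)" and UV: "ss c = 0 \<longrightarrow> U = V"
    using assms unfolding good_def by metis
  show ?thesis
  proof (cases "ss c = 0")
    case True
    then have "D = hmult U" using UV DU
      by (auto simp: fun_eq_iff hmult_add_right[symmetric] PQ_sum)
    then show ?thesis using det_L[of U] by simp
  next
    case False
    then have sp: "ss c > 0" unfolding ss_def
      by (smt (verit) zero_le_power2)
    show ?thesis
    proof (cases "U = 0")
      case True
      have q: "Qp c (axis 1 1) = 0"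
        by (simp add: Qp_def Pp_def axis_def vec_eq_iff forall_4)
      have "matrix D $ i $ 1 = 0" for i
        unfolding matrix_def using True by (simp add: DU q)
      then show ?thesis unfolding det_4 by simp
    next
      case False
      define C where "C = hmult (hinv U) V"
      have "D = hmult U \<circ> (\<lambda>h. Pp c h + hmult C (Qp c h))"
        unfolding C_def fun_eq_iff o_def DU hmult_add_right
        by (simp add: hmult_assoc[symmetric] hmult_hinv[OF False] hmult_hone_left)
      then have "matrix D = matrix (hmult U) ** matrix (\<lambda>h. Pp c h + hmult C (Qp c h))"
        using matrix_compose[OF linear_X linear_hmult] by simp
      then have "det (matrix D) = det (matrix (hmult U)) * det (matrix (\<lambda>h. Pp c h + hmult C (Qp c h)))"
        by (simp add: det_mul)
      then show ?thesis using det_L[of U] det_X[OF sp, of C] by simp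
    qed
  qed
qed

theorem mainTheorem9:
  fixes a :: "nat \<Rightarrow> real^4" and n :: nat and c :: "real^4"
  shows "det (jacobian (left_poly_eval a n) c) \<ge> 0"
proof -
  obtain D where D: "(left_poly_eval a n has_derivative D) (at c)" "good c D"
    using poly_deriv by blast
  show ?thesis using jac_matrix[OF D(1)] det_good[OF D(2)] by simp
qed


end
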